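(* Let $S\le T_n$ be a transformation monoid and $G$ the normalizer of $S$ in $S_n$. If every element of $SG$ has a square root in $SG$, then every element of $S$ has a square root in $S$.
   Context: A transformation monoid is a subsemigroup of $T_n$ containing the identity map; $G=\{g\in S_n:g^{-1}Sg=S\}$ and $SG=\{sg:s\in S,g\in G\}$, a semigroup. A square root of $x$ in a semigroup $U$ is an element $y\in U$ with $y^2=x$. *)

theory Defs
  imports Main
begin

text \<open>Transformations of the n-point set {0..<n}, represented as functions on nat
  that are the identity outside {0..<n}. Products are function composition.\<close>

definition Tn :: "nat \<Rightarrow> (nat \<Rightarrow> nat) set" where
  "Tn n = {f. (\<forall>i<n. f i < n) \<and> (\<forall>i\<ge>n. f i = i)}"

definition Sn :: "nat \<Rightarrow> (nat \<Rightarrow> nat) set" where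
  "Sn n = {f \<in> Tn n. bij f}"

definition transformation_monoid :: "nat \<Rightarrow> (nat \<Rightarrow> nat) set \<Rightarrow> bool" where
  "transformation_monoid n S \<longleftrightarrow> S \<subseteq> Tn n \<and> id \<in> S \<and> (\<forall>f\<in>S. \<forall>g\<in>S. f \<circ> g \<in> S)"

definition normalizer :: "nat \<Rightarrow> (nat \<Rightarrow> nat) set \<Rightarrow> (nat \<Rightarrow> nat) set" where
  "normalizer n S = {g \<in> Sn n. (\<lambda>s. inv g \<circ> s \<circ> g) ` S = S}"

definition setprod :: "(nat \<Rightarrow> nat) set \<Rightarrow> (nat \<Rightarrow> nat) set \<Rightarrow> (nat \<Rightarrow> nat) set" where
  "setprod S G = {s \<circ> g | s g. s \<in> S \<and> g \<in> G}"

end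

theory Submission
  imports Defs
begin

lemma Tn_finite: "finite (Tn n)"
proof -
  let ?h = "\<lambda>xs i. if i<n then xs!i else (i::nat)"
  let ?L = "{xs. set xs \<subseteq> {0..<n} \<and> length xs = n}"
  have "Tn n \<subseteq> ?h ` ?L"
  proof
    fix f assume f: "f \<in> Tn n"
    have "f = ?h (map f [0..<n])"
    proof
      fix i show "f i = ?h (map f [0..<n]) i"
        using f unfolding Tn_def by (cases "i < n") auto
    qed
    moreover have "map f [0..<n] \<in> ?L"
      using f unfolding Tn_def by auto
    ultimately show "f \<in> ?h ` ?L" by (rule image_eqI)
  qed
  moreover have "finite ?L"
    using finite_lists_length_eq[of "{0..<n}" n] by simp
  ultimately show ?thesis using finite_surj by blast
qed

lemma setprod_sub: assumes "S \<subseteq> Tn n" shows "setprod S (normalizer n S) \<subseteq> Tn n"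
proof
  fix x assume "x \<in> setprod S (normalizer n S)"
  then obtain s g where x: "x = s \<circ> g" and s: "s \<in> Tn n" and g: "g \<in> Tn n"
    using assms unfolding setprod_def normalizer_def Sn_def by blast
  show "x \<in> Tn n" using s g unfolding x Tn_def by simp
qed

theorem corollary4p9:
  fixes n :: nat and S :: "(nat \<Rightarrow> nat) set"
  assumes "transformation_monoid n S"
    and "\<forall>x \<in> setprod S (normalizer n S). \<exists>y \<in> setprod S (normalizer n S). y \<circ> y = x"
  shows "\<forall>x \<in> S. \<exists>y \<in> S. y \<circ> y = x"
proof
  fix x assume xS: "x \<in> S"
  define M where "M = setprod S (normalizer n S)"
  have STn: "S \<subseteq> Tn n" using assms(1) unfolding transformation_monoid_def by blast
  have fin: "finite M" unfolding M_def
    by (rule finite_subset[OF setprod_sub[OF STn] Tn_finite])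
  define r where "r z = (SOME y. y \<in> M \<and> y \<circ> y = z)" for z
  have r: "r z \<in> M \<and> r z \<circ> r z = z" if "z \<in> M" for z
  proof -
    have "\<exists>y. y \<in> M \<and> y \<circ> y = z" using assms(2) that unfolding M_def by blast
    then show ?thesis unfolding r_def by (rule someI_ex)
  qed
  have idN: "id \<in> normalizer n S"
    by (auto simp: normalizer_def Sn_def Tn_def)
  have "x = x \<circ> id" by simp
  hence xM: "x \<in> M" unfolding M_def setprod_def using xS idN by blast
  define a where "a j = (r ^^ j) x" for j
  have aM: "a j \<in> M" for j by (induct j) (auto simp: a_def xM r)
  have "\<not> inj (a::nat \<Rightarrow> _)"
  proof
    assume "inj a"
    hence "infinite (range a)" using infinite_UNIV_nat finite_imageD by blast
    moreover have "range a \<subseteq> M" using aM by auto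
    ultimately show False using fin finite_subset by blast
  qed
  then obtain i j where ij: "i < j" "a i = a j"
  proof -
    obtain u v where uv: "u \<noteq> v" "a u = a v" using \<open>\<not> inj a\<close> unfolding inj_def by blast
    show ?thesis
    proof (cases "u < v")
      case True then show ?thesis using uv that by blast
    next
      case False then have "v < u" using uv(1) by simp
      then show ?thesis using uv(2)[symmetric] that by blast
    qed
  qed
  have canc: "a (i - m) = a (j - m)" if "m \<le> i" for m
    using that
  proof (induct m)
    case 0 then show ?case using ij by simp
  next
    case (Suc m)
    have e1: "a (i - m) = r (a (i - Suc m))" "a (j - m) = r (a (j - Suc m))"
      using Suc.prems ij(1) by (simp_all add: a_def Suc_diff_Suc[symmetric])
    have "r (a (i - Suc m)) = r (a (j - Suc m))" using Suc e1 by simp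
    hence "r (a (i - Suc m)) \<circ> r (a (i - Suc m)) = r (a (j - Suc m)) \<circ> r (a (j - Suc m))" by simp
    moreover have "r (a (i - Suc m)) \<circ> r (a (i - Suc m)) = a (i - Suc m)" using r[OF aM[of "i - Suc m"]] by blast
    moreover have "r (a (j - Suc m)) \<circ> r (a (j - Suc m)) = a (j - Suc m)" using r[OF aM[of "j - Suc m"]] by blast
    ultimately show ?case by simp
  qed
  define d where "d = j - i"
  have d1: "d \<ge> 1" using ij d_def by simp
  have ad: "a d = x" using canc[of i] d_def by (simp add: a_def)
  define sq where "sq (f::nat\<Rightarrow>nat) = f \<circ> f" for f
  have key: "(sq ^^ m) (a (p + m)) = a p" for m p
  proof (induct m arbitrary: p)
    case 0 then show ?case by simp
  next
    case (Suc m)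
    have "sq (a (p + Suc m)) = a (p + m)"
      using r[OF aM[of "p+m"]] by (simp add: sq_def a_def)
    moreover have "(sq ^^ Suc m) (a (p + Suc m)) = (sq ^^ m) (sq (a (p + Suc m)))"
      by (simp only: funpow_Suc_right o_apply)
    ultimately show ?case using Suc by simp
  qed
  have "(sq ^^ (d - 1)) x = r x"
    using key[of "d - 1" 1] ad d1 by (simp add: a_def)
  moreover have "(sq ^^ m) x \<in> S" for m
  proof (induct m)
    case 0 then show ?case using xS by simp
  next
    case (Suc m)
    have C: "\<forall>f\<in>S. \<forall>g\<in>S. f \<circ> g \<in> S" using assms(1) unfolding transformation_monoid_def by blast
    have "(sq ^^ m) x \<circ> (sq ^^ m) x \<in> S" using C Suc(1) by blast
    then have "sq ((sq ^^ m) x) \<in> S" by (simp only: sq_def)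
    then show ?case by simp
  qed
  ultimately have "r x \<in> S" by metis
  then show "\<exists>y\<in>S. y \<circ> y = x" using r[OF xM] by blast
qed

end
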